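(* Let $R$ be an associative ring with identity, and let $a,b,c,d\in R$ satisfy $bdb=bac$ and $dbd=acd$. If $ac\in R^{d}$, then $bd\in R^{d}$ and $(bd)^{d}=b\big((ac)^{d}\big)^2d$.
   Context: For $x\in R$, $\mathrm{comm}(x)=\{y\in R : xy=yx\}$ and $\mathrm{comm}^2(x)=\{y\in R : yz=zy \text{ for all } z\in\mathrm{comm}(x)\}$. $R^{inv}$ denotes the units of $R$, and $R^{qnil}=\{x\in R : 1+xy\in R^{inv}\text{ for every } y\in \mathrm{comm}(x)\}$. An element $x\in R$ has a generalized Drazin (g-Drazin) inverse if there is $y\in R$ with $y=yxy$, $y\in\mathrm{comm}^2(x)$ and $x-x^2y\in R^{qnil}$; such $y$ is unique and denoted $x^{d}$. $R^{d}$ is the set of elements having a g-Drazin inverse. *)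

theory Defs
  imports Main
begin

definition comm :: "'a::ring_1 \<Rightarrow> 'a set" where
  "comm x = {y. x * y = y * x}"

definition comm2 :: "'a::ring_1 \<Rightarrow> 'a set" where
  "comm2 x = {y. \<forall>z\<in>comm x. y * z = z * y}"

definition units :: "'a::ring_1 set" where
  "units = {u. \<exists>v. u * v = 1 \<and> v * u = 1}"

definition qnil :: "'a::ring_1 set" where
  "qnil = {x. \<forall>y\<in>comm x. 1 + x * y \<in> units}"

definition is_gdrazin_inv :: "'a::ring_1 \<Rightarrow> 'a \<Rightarrow> bool" where
  "is_gdrazin_inv x y \<longleftrightarrow> y = y * x * y \<and> y \<in> comm2 x \<and> x - x * x * y \<in> qnil"

definition gdrazin_set :: "'a::ring_1 set" where
  "gdrazin_set = {x. \<exists>y. is_gdrazin_inv x y}"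

definition gdrazin :: "'a::ring_1 \<Rightarrow> 'a" where
  "gdrazin x = (THE y. is_gdrazin_inv x y)"

end

theory Submission
  imports Defs
begin

lemma units_I: "u * v = 1 \<Longrightarrow> v * u = 1 \<Longrightarrow> u \<in> units"
  unfolding units_def by blast

lemma jac_unit:
  fixes x y :: "'a::ring_1"
  assumes "1 - x * y \<in> units"
  shows "1 - y * x \<in> units"
proof -
  obtain v where v1: "(1 - x*y) * v = 1" and v2: "v * (1 - x*y) = 1"
    using assms unfolding units_def by blast
  have e1: "x*y*v = v - 1" using v1 by (simp add: algebra_simps)
  have e2: "v*x*y = v - 1" using v2 by (simp add: algebra_simps)
  have "(1 - y*x) * (1 + y*v*x) = 1"
  proof -
    have "(1 - y*x) * (1 + y*v*x) = 1 + y*v*x - y*x - y*(x*y*v)*x"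
      by (simp add: algebra_simps)
    also have "y*(x*y*v)*x = y*(v-1)*x" by (simp only: e1)
    also have "1 + y*v*x - y*x - y*(v-1)*x = 1" by (simp add: algebra_simps)
    finally show ?thesis .
  qed
  moreover have "(1 + y*v*x) * (1 - y*x) = 1"
  proof -
    have "(1 + y*v*x) * (1 - y*x) = 1 + y*v*x - y*x - y*(v*x*y)*x"
      by (simp add: algebra_simps)
    also have "y*(v*x*y)*x = y*(v-1)*x" by (simp only: e2)
    also have "1 + y*v*x - y*x - y*(v-1)*x = 1" by (simp add: algebra_simps)
    finally show ?thesis .
  qed
  ultimately show ?thesis by (rule units_I)
qed

lemma sq_unit:
  fixes x :: "'a::ring_1"
  assumes "1 - x * x \<in> units"
  shows "1 + x \<in> units"
proof -
  obtain v where v1: "(1 - x*x) * v = 1" and v2: "v * (1 - x*x) = 1"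
    using assms unfolding units_def by blast
  have f1: "(1 - x*x) = (1+x)*(1-x)" by (simp add: algebra_simps)
  have f2: "(1 - x*x) = (1-x)*(1+x)" by (simp add: algebra_simps)
  have r: "(1+x) * ((1-x)*v) = 1" using v1 f1 by (simp add: mult.assoc)
  have l: "(v*(1-x)) * (1+x) = 1" using v2 f2 by (simp add: mult.assoc)
  have "v*(1-x) = (v*(1-x)) * ((1+x) * ((1-x)*v))" using r by simp
  also have "\<dots> = (1-x)*v" using l by (simp add: mult.assoc[symmetric])
  finally have "v*(1-x) = (1-x)*v" .
  with r l show ?thesis by (intro units_I[of _ "(1-x)*v"]) auto
qed

lemma lemQ:
  fixes a b c d :: "'a::ring_1"
  assumes h1: "b * d * b = b * a * c" and h2: "d * b * d = a * c * d"
    and q: "a * c \<in> qnil"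
  shows "b * d \<in> qnil"
  unfolding qnil_def
proof (intro CollectI ballI)
  fix t assume "t \<in> comm (b*d)"
  hence ht: "b*d*t = t*(b*d)" unfolding comm_def by simp
  have htt: "b*d*(t*t) = (t*t)*(b*d)"
    by (metis ht mult.assoc)
  define s where "s = d*(t*t)*b"
  have sc: "a*c*s = s*(a*c)"
  proof -
    have "a*c*s = (a*c*d)*(t*t)*b" by (simp add: s_def mult.assoc)
    also have "\<dots> = (d*b*d)*(t*t)*b" using h2 by simp
    also have "\<dots> = d*((b*d)*(t*t))*b" by (simp add: mult.assoc)
    also have "\<dots> = d*((t*t)*(b*d))*b" using htt by simp
    also have "\<dots> = d*(t*t)*(b*d*b)" by (simp add: mult.assoc)
    also have "\<dots> = s*(a*c)" using h1 by (simp add: s_def mult.assoc)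
    finally show ?thesis .
  qed
  have "- s \<in> comm (a*c)" using sc unfolding comm_def by simp
  with q have u: "1 + a*c*(-s) \<in> units" unfolding qnil_def by blast
  have "a*c*s = (d*t*b*d*t)*b"
  proof -
    have "a*c*s = (a*c*d)*t*t*b" by (simp add: s_def mult.assoc)
    also have "\<dots> = (d*b*d)*t*t*b" using h2 by simp
    also have "\<dots> = d*((b*d)*t)*t*b" by (simp add: mult.assoc)
    also have "\<dots> = d*(t*(b*d))*t*b" using ht by simp
    finally show ?thesis by (simp add: mult.assoc)
  qed
  with u have "1 - (d*t*b*d*t)*b \<in> units" by simp
  hence "1 - b*(d*t*b*d*t) \<in> units" by (rule jac_unit)
  hence "1 - (b*d*t)*(b*d*t) \<in> units" by (simp add: mult.assoc)
  hence "1 + b*d*t \<in> units" by (rule sq_unit)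
  thus "1 + b*d*t \<in> units" .
qed

lemma gd_comm:
  assumes "is_gdrazin_inv x y" and "w \<in> comm x"
  shows "y * w = w * y"
  using assms unfolding is_gdrazin_inv_def comm2_def by blast

lemma gd_unique:
  fixes x y z :: "'a::ring_1"
  assumes hy: "is_gdrazin_inv x y" and hz: "is_gdrazin_inv x z"
  shows "y = z"
proof -
  have xx: "x \<in> comm x" unfolding comm_def by simp
  have yx: "y*x = x*y" using gd_comm[OF hy xx] .
  have zx: "z*x = x*z" using gd_comm[OF hz xx] .
  have yz: "y*z = z*y" using gd_comm[OF hy, of z] zx unfolding comm_def by simp
  have yyy: "y = y*x*y" and zzz: "z = z*x*z" using hy hz unfolding is_gdrazin_inv_def by auto
  have idy: "x*y*(x*y) = x*y" using yyy by (metis mult.assoc)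
  have idz: "x*z*(x*z) = x*z" using zzz by (metis mult.assoc)
  have cyz: "x*y*(x*z) = x*z*(x*y)"
    by (metis mult.assoc yx zx yz)
  have key: "\<And>y z. is_gdrazin_inv x y \<Longrightarrow> is_gdrazin_inv x z \<Longrightarrow> x*z = x*y*(x*z)"
  proof -
    fix y z assume hy: "is_gdrazin_inv x y" and hz: "is_gdrazin_inv x z"
    have yx: "y*x = x*y" using gd_comm[OF hy xx] .
    have zx: "z*x = x*z" using gd_comm[OF hz xx] .
    have yz: "y*z = z*y" using gd_comm[OF hy, of z] zx unfolding comm_def by simp
    have yyy: "y = y*x*y" and zzz: "z = z*x*z" using hy hz unfolding is_gdrazin_inv_def by auto
    have idy: "x*y*(x*y) = x*y" using yyy by (metis mult.assoc)
    have idz: "x*z*(x*z) = x*z" using zzz by (metis mult.assoc)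
    have cyz: "x*y*(x*z) = x*z*(x*y)"
      by (metis mult.assoc yx zx yz)
    define n where "n = x - x*x*y"
    have nq: "n \<in> qnil" using hy unfolding is_gdrazin_inv_def n_def by simp
    have nz: "n*(-z) = (-z)*n"
    proof -
      have 1: "x*x*y*z = z*(x*x*y)" by (metis mult.assoc yz zx)
      have "n*z = x*z - x*x*y*z" by (simp add: n_def left_diff_distrib)
      also have "\<dots> = z*x - z*(x*x*y)" using 1 zx by simp
      also have "\<dots> = z*n" by (simp add: n_def right_diff_distrib)
      finally show ?thesis by simp
    qed
    hence "-z \<in> comm n" unfolding comm_def by simp
    with nq have u: "1 + n*(-z) \<in> units" unfolding qnil_def by blast
    define w where "w = x*z - x*y*(x*z)"
    have wn0: "x*y*(x*z) = x*x*y*z" by (metis mult.assoc yx)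
    have wn: "n*z = w" unfolding n_def w_def by (simp only: left_diff_distrib wn0)
    have ww: "w*w = w"
    proof -
      have "w*w = x*z*(x*z) - x*z*(x*y*(x*z)) - x*y*(x*z)*(x*z) + x*y*(x*z)*(x*y*(x*z))"
        unfolding w_def by (simp add: algebra_simps)
      also have "x*z*(x*y*(x*z)) = x*y*(x*z)" by (metis cyz idz mult.assoc)
      also have "x*y*(x*z)*(x*z) = x*y*(x*z)" by (metis idz mult.assoc)
      also have "x*y*(x*z)*(x*y*(x*z)) = x*y*(x*z)" by (metis cyz idz idy mult.assoc)
      also have "x*z*(x*z) = x*z" by (rule idz)
      finally have "w*w = x*z - x*y*(x*z) - x*y*(x*z) + x*y*(x*z)" .
      thus ?thesis unfolding w_def by simp
    qed
    from u wn have "1 - w \<in> units" by simp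
    then obtain v where v: "(1-w)*v = 1" unfolding units_def by blast
    have w0: "w*(1-w) = 0" using ww by (simp add: right_diff_distrib)
    have "w = w*((1-w)*v)" using v by simp
    also have "\<dots> = (w*(1-w))*v" by (simp only: mult.assoc)
    also have "\<dots> = 0" using w0 by simp
    finally have "w = 0" .
    thus "x*z = x*y*(x*z)" unfolding w_def by simp
  qed
  have a1: "x*z = x*y*(x*z)" by (rule key[OF hy hz])
  have a2: "x*y = x*z*(x*y)" by (rule key[OF hz hy])
  have exz: "x*y = x*z" using a1 a2 cyz by simp
  have "y = y*(x*y)" using yyy by (simp add: mult.assoc)
  also have "\<dots> = (y*x)*z" using exz by (simp add: mult.assoc)
  also have "\<dots> = z*(x*z)" using yx exz zx by (metis mult.assoc)
  also have "\<dots> = z" using zzz by (simp add: mult.assoc)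
  finally show ?thesis .
qed


lemma gd_eq: "is_gdrazin_inv x y \<Longrightarrow> gdrazin x = y"
  unfolding gdrazin_def by (rule the_equality) (auto intro: gd_unique)

theorem theorem2p2:
  fixes a b c d :: "'a::ring_1"
  assumes "b * d * b = b * a * c" and "d * b * d = a * c * d"
    and "a * c \<in> gdrazin_set"
  shows "b * d \<in> gdrazin_set \<and> gdrazin (b * d) = b * (gdrazin (a * c))^2 * d"
proof -
  note h1 = assms(1) and h2 = assms(2)
  have H1: "\<And>w. b*(a*(c*w)) = b*(d*(b*w))"
    by (metis h1 mult.assoc)
  have H2: "\<And>w. a*(c*(d*w)) = d*(b*(d*w))"
    by (metis h2 mult.assoc)
  define A where "A = a*c"
  obtain y where hy: "is_gdrazin_inv A y" using assms(3) unfolding gdrazin_set_def A_def by blast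
  have gy: "gdrazin (a*c) = y" using gd_eq[OF hy] unfolding A_def .
  define g where "g = d*b"
  have yAy: "y*A*y = y" using hy unfolding is_gdrazin_inv_def by simp
  have yA: "y*A = A*y" using gd_comm[OF hy] unfolding comm_def by simp
  have Ag: "A*g = g*A"
  proof -
    have "A*g = (a*c*d)*b" by (simp add: A_def g_def mult.assoc)
    also have "\<dots> = (d*b*d)*b" using h2 by simp
    also have "\<dots> = d*(b*d*b)" by (simp add: mult.assoc)
    also have "\<dots> = d*(b*a*c)" using h1 by simp
    finally show ?thesis by (simp add: A_def g_def mult.assoc)
  qed
  have yg: "y*g = g*y" using gd_comm[OF hy, of g] Ag unfolding comm_def by simp
  have bg: "b*g = b*A" using h1 by (simp add: A_def g_def mult.assoc)
  have gd: "g*d = A*d" using h2 by (simp add: A_def g_def mult.assoc)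
  have Ayy: "A*(y*y) = y" using yAy yA by (metis mult.assoc)
  have bgg: "b*(g*g) = b*(A*A)"
  proof -
    have "b*(g*g) = (b*g)*g" by (simp add: mult.assoc)
    also have "\<dots> = b*(A*g)" using bg by (simp add: mult.assoc)
    also have "\<dots> = (b*g)*A" using Ag by (simp add: mult.assoc)
    also have "\<dots> = b*(A*A)" using bg by (simp add: mult.assoc)
    finally show ?thesis .
  qed
  have yygg: "y*y*(g*g) = g*g*(y*y)" using yg by (metis mult.assoc)
  define z where "z = b*y*y*d"
  have E1: "z = z*(b*d)*z"
  proof -
    have "z*(b*d)*z = b*(y*y*(g*g))*(y*y)*d" by (simp add: z_def g_def mult.assoc)
    also have "\<dots> = b*(g*g)*(y*y)*(y*y)*d" using yygg by (simp add: mult.assoc)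
    also have "\<dots> = b*(A*A)*(y*y)*(y*y)*d" using bgg by simp
    also have "\<dots> = b*(A*(A*(y*y)))*(y*y)*d" by (simp add: mult.assoc)
    also have "\<dots> = b*(A*y)*(y*y)*d" using Ayy by simp
    also have "\<dots> = b*(A*(y*y))*y*d" by (simp add: mult.assoc)
    also have "\<dots> = z" using Ayy by (simp add: z_def)
    finally show ?thesis by simp
  qed
  have E2: "z \<in> comm2 (b*d)"
    unfolding comm2_def
  proof (intro CollectI ballI)
    fix t assume "t \<in> comm (b*d)"
    hence ht: "b*d*t = t*(b*d)" unfolding comm_def by simp
    define s where "s = d*t*b"
    have sA: "A*s = s*A"
    proof -
      have "A*s = (a*c*d)*t*b" by (simp add: A_def s_def mult.assoc)
      also have "\<dots> = d*(b*d*t)*b" by (simp add: mult.assoc H2)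
      also have "\<dots> = d*t*(b*d*b)" using ht by (simp add: mult.assoc)
      also have "\<dots> = s*A" using h1 by (simp add: A_def s_def mult.assoc)
      finally show ?thesis .
    qed
    have ys: "y*s = s*y" using gd_comm[OF hy, of s] sA unfolding comm_def by simp
    have yyy: "y*y = y*y*y*A" using yAy yA by (metis mult.assoc)
    have Ayyy: "A*(y*y*y) = y*y" using Ayy by (metis mult.assoc)
    have y3s: "y*y*y*s = s*(y*y*y)" using ys by (metis mult.assoc)
    have "z*t = b*(y*y)*d*t" by (simp add: z_def mult.assoc)
    also have "\<dots> = b*(y*y*y*A)*d*t" by (rule arg_cong[where f="\<lambda>u. b*u*d*t"], rule yyy)
    also have "\<dots> = b*(y*y*y)*(A*d)*t" by (simp add: mult.assoc)
    also have "\<dots> = b*(y*y*y)*d*(b*d*t)" by (simp add: A_def mult.assoc H2)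
    also have "\<dots> = b*(y*y*y*s)*d" using ht by (simp add: s_def mult.assoc)
    also have "\<dots> = (b*d*t)*b*(y*y*y)*d" using y3s by (simp add: s_def mult.assoc)
    also have "\<dots> = t*(b*d*b)*(y*y*y)*d" using ht by (simp add: mult.assoc)
    also have "\<dots> = t*b*(A*(y*y*y))*d" by (simp add: A_def mult.assoc H1)
    also have "\<dots> = t*z" using Ayyy by (simp add: z_def mult.assoc)
    finally show "z*t = t*z" .
  qed
  define e where "e = 1 - A*y"
  have eg: "e*g = g*e"
  proof -
    have "A*y*g = g*(A*y)" using yg Ag by (metis mult.assoc)
    thus ?thesis by (simp add: e_def left_diff_distrib right_diff_distrib)
  qed
  have ee: "e*e = e"
  proof -
    have "A*y*(A*y) = A*y" using yAy by (metis mult.assoc)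
    thus ?thesis by (simp add: e_def algebra_simps)
  qed
  have eA: "e*A = A*e"
  proof -
    have "A*y*A = A*(A*y)" using yA by (metis mult.assoc)
    thus ?thesis by (simp add: e_def left_diff_distrib right_diff_distrib)
  qed
  have X: "b*d - b*d*(b*d)*z = b*(e*d)"
  proof -
    have "b*d*(b*d)*z = b*(g*g)*(y*y)*d" by (simp add: z_def g_def mult.assoc)
    also have "\<dots> = b*(A*(A*(y*y)))*d" using bgg by (simp add: mult.assoc)
    also have "\<dots> = b*(A*y)*d" using Ayy by simp
    finally show ?thesis by (simp add: e_def algebra_simps)
  qed
  have q1: "b*(e*d)*b = b*a*(c*e)"
  proof -
    have "b*(e*d)*b = b*(e*g)" by (simp add: g_def mult.assoc)
    also have "\<dots> = (b*g)*e" using eg by (simp add: mult.assoc)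
    also have "\<dots> = b*a*(c*e)" using bg by (simp add: A_def mult.assoc)
    finally show ?thesis .
  qed
  have q2: "e*d*b*(e*d) = a*(c*e)*(e*d)"
  proof -
    have "e*d*b*(e*d) = (e*g)*e*d" by (simp add: g_def mult.assoc)
    also have "\<dots> = (e*e)*(g*d)" by (metis eg mult.assoc)
    also have "\<dots> = (e*A)*d" using ee gd by (simp add: mult.assoc)
    also have "\<dots> = A*(e*e)*d" using eA ee by (simp add: mult.assoc)
    finally show ?thesis by (simp add: A_def mult.assoc)
  qed
  have q3: "a*(c*e) \<in> qnil"
  proof -
    have "a*(c*e) = A - A*A*y" by (simp add: A_def e_def algebra_simps)
    thus ?thesis using hy unfolding is_gdrazin_inv_def by simp
  qed
  have E3: "b*d - b*d*(b*d)*z \<in> qnil" using lemQ[OF q1 q2 q3] X by simp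
  have hz: "is_gdrazin_inv (b*d) z" unfolding is_gdrazin_inv_def using E1 E2 E3 by simp
  show ?thesis
    using gd_eq[OF hz] hz gy unfolding gdrazin_set_def z_def
    by (auto simp: power2_eq_square mult.assoc)
qed

end
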